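(* Let $T$ be a complete theory with monster model $\mathcal{U}$, $A\subseteq\mathcal{U}$ small, and $\mu\in\mathfrak{M}_x(\mathcal{U})$, $\nu\in\mathfrak{M}_y(\mathcal{U})$, $\eta\in\mathfrak{M}_z(\mathcal{U})$ (with $x,y,z$ pairwise disjoint). If $\mu\geq_{\mathbb{E},A}\nu$ and $\nu\geq_{\mathbb{E},A}\eta$, then $\mu\geq_{\mathbb{E},A}\eta$.
   Context: For $B\subseteq\mathcal{U}$, $\mathcal{L}_x(B)$ is the Boolean algebra of formulas in $x$ with parameters from $B$ modulo $T$, embedded in $\mathcal{L}_{xy}(B)$ via $\varphi(x)\mapsto\varphi(x)\wedge y=y$; $\mathfrak{M}_x(B)$ is the set of finitely additive probability measures on $\mathcal{L}_x(B)$. For $\omega\in\mathfrak{M}_{xy}(B)$, $\pi_x(\omega)(\varphi(x))=\omega(\varphi(x)\wedge y=y)$ (similarly $\pi_y$); $\omega|_C$ is restriction. For $\mu\in\mathfrak{M}_x(\mathcal{U})$, $\nu\in\mathfrak{M}_y(\mathcal{U})$: $\mu\geq_{\mathbb{E},A}\nu$ means there is $\lambda\in\mathfrak{M}_{xy}(A)$ with $\pi_x(\lambda)=\mu|_A$ such that every $\omega\in\mathfrak{M}_{xy}(\mathcal{U})$ with $\omega|_A=\lambda$ and $\pi_x(\omega)=\mu$ satisfies $\pi_y(\omega)=\nu$ (analogously for other pairs of variable tuples). *)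

theory Defs
  imports Complex_Main "HOL-Library.FuncSet"
begin

unbundle cardinal_syntax

text \<open>The monster model has universe UNIV :: 'u set and is given
by interpretations F and R.\<close>

datatype ('f,'u) trm = Var nat | Par 'u | Fn 'f "('f,'u) trm list"

datatype ('f,'r,'u) fml =
    Eq "('f,'u) trm" "('f,'u) trm"
  | Rl 'r "('f,'u) trm list"
  | Neg "('f,'r,'u) fml"
  | Conj "('f,'r,'u) fml" "('f,'r,'u) fml"
  | Ex nat "('f,'r,'u) fml"

fun evalt :: "('f \<Rightarrow> 'u list \<Rightarrow> 'u) \<Rightarrow> (nat \<Rightarrow> 'u) \<Rightarrow> ('f,'u) trm \<Rightarrow> 'u" where
  "evalt F a (Var n) = a n"
| "evalt F a (Par u) = u"
| "evalt F a (Fn f ts) = F f (map (evalt F a) ts)"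

fun sat :: "('f \<Rightarrow> 'u list \<Rightarrow> 'u) \<Rightarrow> ('r \<Rightarrow> 'u list \<Rightarrow> bool) \<Rightarrow> (nat \<Rightarrow> 'u)
             \<Rightarrow> ('f,'r,'u) fml \<Rightarrow> bool" where
  "sat F R a (Eq s t) = (evalt F a s = evalt F a t)"
| "sat F R a (Rl r ts) = R r (map (evalt F a) ts)"
| "sat F R a (Neg \<phi>) = (\<not> sat F R a \<phi>)"
| "sat F R a (Conj \<phi> \<psi>) = (sat F R a \<phi> \<and> sat F R a \<psi>)"
| "sat F R a (Ex n \<phi>) = (\<exists>u. sat F R (a(n := u)) \<phi>)"

fun fvt :: "('f,'u) trm \<Rightarrow> nat set" where
  "fvt (Var n) = {n}"
| "fvt (Par u) = {}"
| "fvt (Fn f ts) = (\<Union>t\<in>set ts. fvt t)"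

fun fv :: "('f,'r,'u) fml \<Rightarrow> nat set" where
  "fv (Eq s t) = fvt s \<union> fvt t"
| "fv (Rl r ts) = (\<Union>t\<in>set ts. fvt t)"
| "fv (Neg \<phi>) = fv \<phi>"
| "fv (Conj \<phi> \<psi>) = fv \<phi> \<union> fv \<psi>"
| "fv (Ex n \<phi>) = fv \<phi> - {n}"

fun part :: "('f,'u) trm \<Rightarrow> 'u set" where
  "part (Var n) = {}"
| "part (Par u) = {u}"
| "part (Fn f ts) = (\<Union>t\<in>set ts. part t)"

fun params :: "('f,'r,'u) fml \<Rightarrow> 'u set" where
  "params (Eq s t) = part s \<union> part t"
| "params (Rl r ts) = (\<Union>t\<in>set ts. part t)"
| "params (Neg \<phi>) = params \<phi>"
| "params (Conj \<phi> \<psi>) = params \<phi> \<union> params \<psi>"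
| "params (Ex n \<phi>) = params \<phi>"

fun mapt :: "('u \<Rightarrow> 'u) \<Rightarrow> ('f,'u) trm \<Rightarrow> ('f,'u) trm" where
  "mapt g (Var n) = Var n"
| "mapt g (Par u) = Par (g u)"
| "mapt g (Fn f ts) = Fn f (map (mapt g) ts)"

fun mapp :: "('u \<Rightarrow> 'u) \<Rightarrow> ('f,'r,'u) fml \<Rightarrow> ('f,'r,'u) fml" where
  "mapp g (Eq s t) = Eq (mapt g s) (mapt g t)"
| "mapp g (Rl r ts) = Rl r (map (mapt g) ts)"
| "mapp g (Neg \<phi>) = Neg (mapp g \<phi>)"
| "mapp g (Conj \<phi> \<psi>) = Conj (mapp g \<phi>) (mapp g \<psi>)"
| "mapp g (Ex n \<phi>) = Ex n (mapp g \<phi>)"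

definition saturated ::
  "('f \<Rightarrow> 'u list \<Rightarrow> 'u) \<Rightarrow> ('r \<Rightarrow> 'u list \<Rightarrow> bool) \<Rightarrow> 'k rel \<Rightarrow> bool" where
  "saturated F R \<kappa> \<longleftrightarrow>
     (\<forall>(B::'u set) (X::nat set) (p::('f,'r,'u) fml set).
        |B| <o \<kappa> \<and> finite X \<and> (\<forall>\<phi>\<in>p. params \<phi> \<subseteq> B \<and> fv \<phi> \<subseteq> X)
        \<and> (\<forall>q\<subseteq>p. finite q \<longrightarrow> (\<exists>a. \<forall>\<phi>\<in>q. sat F R a \<phi>))
        \<longrightarrow> (\<exists>a. \<forall>\<phi>\<in>p. sat F R a \<phi>))"

definition automorphism ::
  "('f \<Rightarrow> 'u list \<Rightarrow> 'u) \<Rightarrow> ('r \<Rightarrow> 'u list \<Rightarrow> bool) \<Rightarrow> ('u \<Rightarrow> 'u) \<Rightarrow> bool" where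
  "automorphism F R \<sigma> \<longleftrightarrow> bij \<sigma>
     \<and> (\<forall>f us. \<sigma> (F f us) = F f (map \<sigma> us))
     \<and> (\<forall>r us. R r (map \<sigma> us) = R r us)"

definition elementary_on ::
  "('f \<Rightarrow> 'u list \<Rightarrow> 'u) \<Rightarrow> ('r \<Rightarrow> 'u list \<Rightarrow> bool) \<Rightarrow> 'u set \<Rightarrow> ('u \<Rightarrow> 'u) \<Rightarrow> bool" where
  "elementary_on F R B g \<longleftrightarrow>
     (\<forall>(\<phi>::('f,'r,'u) fml) a. params \<phi> \<subseteq> B \<and> fv \<phi> = {} \<longrightarrow>
         (sat F R a \<phi> \<longleftrightarrow> sat F R a (mapp g \<phi>)))"

definition homogeneous ::
  "('f \<Rightarrow> 'u list \<Rightarrow> 'u) \<Rightarrow> ('r \<Rightarrow> 'u list \<Rightarrow> bool) \<Rightarrow> 'k rel \<Rightarrow> bool" where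
  "homogeneous F R \<kappa> \<longleftrightarrow>
     (\<forall>(B::'u set) g. |B| <o \<kappa> \<and> elementary_on F R B g \<longrightarrow>
        (\<exists>\<sigma>. automorphism F R \<sigma> \<and> (\<forall>b\<in>B. \<sigma> b = g b)))"

text \<open>The monster model: kappa is an infinite cardinal larger than the size of the
language (plus aleph_0), and the structure is kappa-saturated and strongly
kappa-homogeneous.  "Small" means of cardinality < kappa.\<close>
definition monster ::
  "('f \<Rightarrow> 'u list \<Rightarrow> 'u) \<Rightarrow> ('r \<Rightarrow> 'u list \<Rightarrow> bool) \<Rightarrow> 'k rel \<Rightarrow> bool" where
  "monster F R \<kappa> \<longleftrightarrow> Card_order \<kappa>
     \<and> |UNIV :: ('f + 'r + nat) set| <o \<kappa>
     \<and> saturated F R \<kappa> \<and> homogeneous F R \<kappa>"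

text \<open>L_X(B): formulas with free variables among the tuple X and parameters from B,
modulo T = Th(monster), represented by the subsets of U^X they define.
Elements of U^X are the functions in X ->E UNIV.\<close>
definition Lalg ::
  "('f \<Rightarrow> 'u list \<Rightarrow> 'u) \<Rightarrow> ('r \<Rightarrow> 'u list \<Rightarrow> bool) \<Rightarrow> nat set \<Rightarrow> 'u set
     \<Rightarrow> (nat \<Rightarrow> 'u) set set" where
  "Lalg F R X B = {{a \<in> X \<rightarrow>\<^sub>E UNIV. sat F R a \<phi>} | \<phi>::('f,'r,'u) fml.
                      params \<phi> \<subseteq> B \<and> fv \<phi> \<subseteq> X}"

text \<open>Finitely additive probability measures on L_X(B) (set to 0 outside L_X(B)).\<close>
definition keisler ::
  "('f \<Rightarrow> 'u list \<Rightarrow> 'u) \<Rightarrow> ('r \<Rightarrow> 'u list \<Rightarrow> bool) \<Rightarrow> nat set \<Rightarrow> 'u set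
     \<Rightarrow> ((nat \<Rightarrow> 'u) set \<Rightarrow> real) \<Rightarrow> bool" where
  "keisler F R X B m \<longleftrightarrow>
     (\<forall>D. D \<notin> Lalg F R X B \<longrightarrow> m D = 0)
     \<and> (\<forall>D\<in>Lalg F R X B. 0 \<le> m D)
     \<and> m (X \<rightarrow>\<^sub>E UNIV) = 1
     \<and> (\<forall>D\<in>Lalg F R X B. \<forall>E\<in>Lalg F R X B. D \<inter> E = {} \<longrightarrow> m (D \<union> E) = m D + m E)"

definition restr ::
  "('f \<Rightarrow> 'u list \<Rightarrow> 'u) \<Rightarrow> ('r \<Rightarrow> 'u list \<Rightarrow> bool) \<Rightarrow> nat set \<Rightarrow> 'u set
     \<Rightarrow> ((nat \<Rightarrow> 'u) set \<Rightarrow> real) \<Rightarrow> ((nat \<Rightarrow> 'u) set \<Rightarrow> real)" where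
  "restr F R X C m = (\<lambda>D. if D \<in> Lalg F R X C then m D else 0)"

text \<open>Pushforward to a subtuple W of V: phi(w) is identified with phi(w) and v=v,
i.e. with the cylinder over the set it defines.\<close>
definition proj ::
  "('f \<Rightarrow> 'u list \<Rightarrow> 'u) \<Rightarrow> ('r \<Rightarrow> 'u list \<Rightarrow> bool) \<Rightarrow> nat set \<Rightarrow> nat set \<Rightarrow> 'u set
     \<Rightarrow> ((nat \<Rightarrow> 'u) set \<Rightarrow> real) \<Rightarrow> ((nat \<Rightarrow> 'u) set \<Rightarrow> real)" where
  "proj F R V W B m = (\<lambda>D. if D \<in> Lalg F R W B
                               then m {a \<in> V \<rightarrow>\<^sub>E UNIV. restrict a W \<in> D} else 0)"

definition geE ::
  "('f \<Rightarrow> 'u list \<Rightarrow> 'u) \<Rightarrow> ('r \<Rightarrow> 'u list \<Rightarrow> bool) \<Rightarrow> 'u set \<Rightarrow> nat set \<Rightarrow> nat set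
     \<Rightarrow> ((nat \<Rightarrow> 'u) set \<Rightarrow> real) \<Rightarrow> ((nat \<Rightarrow> 'u) set \<Rightarrow> real) \<Rightarrow> bool" where
  "geE F R A X Y \<mu> \<nu> \<longleftrightarrow>
     (\<exists>lam. keisler F R (X \<union> Y) A lam
        \<and> proj F R (X \<union> Y) X A lam = restr F R X A \<mu>
        \<and> (\<forall>\<omega>. keisler F R (X \<union> Y) UNIV \<omega>
               \<and> restr F R (X \<union> Y) A \<omega> = lam
               \<and> proj F R (X \<union> Y) X UNIV \<omega> = \<mu>
               \<longrightarrow> proj F R (X \<union> Y) Y UNIV \<omega> = \<nu>))"

end

theory Submission
  imports Defs "HOL-Analysis.Analysis"
begin


context fixes F :: "'f \<Rightarrow> 'u list \<Rightarrow> 'u" and R :: "'r \<Rightarrow> 'u list \<Rightarrow> bool"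
begin

lemma evalt_agree: "(\<forall>n\<in>fvt t. a n = b n) \<Longrightarrow> evalt F a t = evalt F b t"
proof (induction t)
  case (Fn f ts)
  then have "map (evalt F a) ts = map (evalt F b) ts" by (auto simp: map_eq_conv)
  then show ?case by (metis evalt.simps(3))
qed auto

lemma sat_agree: "(\<forall>n\<in>fv \<phi>. a n = b n) \<Longrightarrow> sat F R a \<phi> = sat F R b \<phi>"
proof (induction \<phi> arbitrary: a b)
  case (Eq s t) then show ?case by (simp add: evalt_agree[of s a b] evalt_agree[of t a b])
next
  case (Rl r ts)
  have "map (evalt F a) ts = map (evalt F b) ts"
    using Rl.prems by (auto simp: map_eq_conv intro!: evalt_agree)
  then show ?case by (metis sat.simps(2))
next
  case (Conj p q)
  have "sat F R a p = sat F R b p" using Conj.prems by (intro Conj.IH(1)) auto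
  moreover have "sat F R a q = sat F R b q" using Conj.prems by (intro Conj.IH(2)) auto
  ultimately show ?case by simp
next
  case (Ex n \<phi>)
  have "\<And>u. sat F R (a(n:=u)) \<phi> = sat F R (b(n:=u)) \<phi>"
    using Ex.prems by (intro Ex.IH) auto
  then show ?case by simp
qed auto

lemma sat_exs: "sat F R a (foldr Ex ns \<phi>) \<longleftrightarrow> (\<exists>g. sat F R (\<lambda>n. if n \<in> set ns then g n else a n) \<phi>)"
proof (induction ns arbitrary: a)
  case Nil then show ?case by simp
next
  case (Cons n ns)
  show ?case
  proof
    assume "sat F R a (foldr Ex (n # ns) \<phi>)"
    then obtain u g where h: "sat F R (\<lambda>m. if m \<in> set ns then g m else (a(n:=u)) m) \<phi>"
      using Cons by auto
    let ?g = "\<lambda>m. if m \<in> set ns then g m else u"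
    have "(\<lambda>m. if m \<in> set ns then g m else (a(n:=u)) m) = (\<lambda>m. if m \<in> set (n#ns) then ?g m else a m)"
      by auto
    then show "\<exists>g. sat F R (\<lambda>m. if m \<in> set (n#ns) then g m else a m) \<phi>" using h by metis
  next
    assume "\<exists>g. sat F R (\<lambda>m. if m \<in> set (n#ns) then g m else a m) \<phi>"
    then obtain g where h: "sat F R (\<lambda>m. if m \<in> set (n#ns) then g m else a m) \<phi>" by blast
    have "(\<lambda>m. if m \<in> set ns then g m else (a(n:=g n)) m) = (\<lambda>m. if m \<in> set (n#ns) then g m else a m)"
      by auto
    then have "sat F R (a(n:=g n)) (foldr Ex ns \<phi>)" using h Cons by metis
    then show "sat F R a (foldr Ex (n # ns) \<phi>)" by auto
  qed
qed

lemma fv_exs: "fv (foldr Ex ns \<phi>) = fv \<phi> - set ns"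
  by (induction ns) auto

lemma params_exs: "params (foldr Ex ns \<phi>) = params \<phi>"
  by (induction ns) auto

lemma Lalg_elim:
  assumes "D \<in> Lalg F R V B"
  obtains \<phi> :: "('f,'r,'u) fml" where "params \<phi> \<subseteq> B" "fv \<phi> \<subseteq> V" "D = {a \<in> V \<rightarrow>\<^sub>E UNIV. sat F R a \<phi>}"
  using assms unfolding Lalg_def by blast

lemma LalgI:
  fixes \<phi> :: "('f,'r,'u) fml"
  shows "params \<phi> \<subseteq> B \<Longrightarrow> fv \<phi> \<subseteq> V \<Longrightarrow> D = {a \<in> V \<rightarrow>\<^sub>E UNIV. sat F R a \<phi>} \<Longrightarrow> D \<in> Lalg F R V B"
  unfolding Lalg_def by blast

lemma Lalg_sub: "D \<in> Lalg F R V B \<Longrightarrow> D \<subseteq> V \<rightarrow>\<^sub>E UNIV"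
  by (auto elim: Lalg_elim)

lemma Lalg_top: "(V \<rightarrow>\<^sub>E UNIV) \<in> (Lalg F R V B :: (nat \<Rightarrow> 'u) set set)"
proof -
  let ?\<phi> = "Ex 0 (Eq (Var 0) (Var 0)) :: ('f,'r,'u) fml"
  show ?thesis by (rule LalgI[of ?\<phi>]) auto
qed

lemma Lalg_compl: "D \<in> Lalg F R V B \<Longrightarrow> (V \<rightarrow>\<^sub>E UNIV) - D \<in> Lalg F R V B"
proof (erule Lalg_elim)
  fix \<phi> :: "('f,'r,'u) fml" assume "params \<phi> \<subseteq> B" "fv \<phi> \<subseteq> V" "D = {a \<in> V \<rightarrow>\<^sub>E UNIV. sat F R a \<phi>}"
  then show ?thesis by (intro LalgI[of "Neg \<phi>"]) auto
qed

lemma Lalg_int: "D \<in> Lalg F R V B \<Longrightarrow> E \<in> Lalg F R V B \<Longrightarrow> D \<inter> E \<in> Lalg F R V B"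
proof (erule Lalg_elim, erule Lalg_elim)
  fix \<phi> \<psi> :: "('f,'r,'u) fml" assume "params \<phi> \<subseteq> B" "fv \<phi> \<subseteq> V" "D = {a \<in> V \<rightarrow>\<^sub>E UNIV. sat F R a \<phi>}"
    "params \<psi> \<subseteq> B" "fv \<psi> \<subseteq> V" "E = {a \<in> V \<rightarrow>\<^sub>E UNIV. sat F R a \<psi>}"
  then show ?thesis by (intro LalgI[of "Conj \<phi> \<psi>"]) auto
qed

lemma Lalg_diff: "D \<in> Lalg F R V B \<Longrightarrow> E \<in> Lalg F R V B \<Longrightarrow> D - E \<in> Lalg F R V B"
proof -
  assume a: "D \<in> Lalg F R V B" "E \<in> Lalg F R V B"
  have "D - E = D \<inter> ((V \<rightarrow>\<^sub>E UNIV) - E)" using Lalg_sub[OF a(1)] by auto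
  then show ?thesis using a Lalg_int Lalg_compl by metis
qed

lemma Lalg_empty: "{} \<in> Lalg F R V B"
  using Lalg_diff[OF Lalg_top Lalg_top] by simp

lemma Lalg_un: "D \<in> Lalg F R V B \<Longrightarrow> E \<in> Lalg F R V B \<Longrightarrow> D \<union> E \<in> Lalg F R V B"
proof -
  assume a: "D \<in> Lalg F R V B" "E \<in> Lalg F R V B"
  have "D \<union> E = (V \<rightarrow>\<^sub>E UNIV) - (((V \<rightarrow>\<^sub>E UNIV) - D) \<inter> ((V \<rightarrow>\<^sub>E UNIV) - E))"
    using Lalg_sub[OF a(1)] Lalg_sub[OF a(2)] by auto
  then show ?thesis using a Lalg_int Lalg_compl by metis
qed

lemma Lalg_mono: "B \<subseteq> B' \<Longrightarrow> Lalg F R V B \<subseteq> Lalg F R V B'"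
  unfolding Lalg_def by blast

end

definition cyl :: "nat set \<Rightarrow> nat set \<Rightarrow> (nat \<Rightarrow> 'u) set \<Rightarrow> (nat \<Rightarrow> 'u) set" where
  "cyl V W D = {a \<in> V \<rightarrow>\<^sub>E UNIV. restrict a W \<in> D}"

context fixes F :: "'f \<Rightarrow> 'u list \<Rightarrow> 'u" and R :: "'r \<Rightarrow> 'u list \<Rightarrow> bool"
begin

lemma Lalg_cyl: assumes "W \<subseteq> V" "D \<in> Lalg F R W B" shows "cyl V W D \<in> Lalg F R V B"
  using assms(2)
proof (rule Lalg_elim)
  fix \<phi> :: "('f,'r,'u) fml" assume h: "params \<phi> \<subseteq> B" "fv \<phi> \<subseteq> W" "D = {a \<in> W \<rightarrow>\<^sub>E UNIV. sat F R a \<phi>}"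
  have "\<And>a. sat F R (restrict a W) \<phi> = sat F R a \<phi>"
    using h(2) by (intro sat_agree) auto
  then show ?thesis using h assms(1) unfolding cyl_def by (intro LalgI[of \<phi>]) auto
qed

lemma cyl_cyl: "S \<subseteq> W \<Longrightarrow> cyl V W (cyl W S D) = cyl V S D"
  unfolding cyl_def by (auto simp: restrict_restrict Int_absorb1)

lemma cyl_same: "D \<subseteq> V \<rightarrow>\<^sub>E UNIV \<Longrightarrow> cyl V V D = D"
  unfolding cyl_def by (auto simp: restrict_PiE_iff)

lemma cyl_top: "W \<subseteq> V \<Longrightarrow> cyl V W (W \<rightarrow>\<^sub>E UNIV) = V \<rightarrow>\<^sub>E UNIV"
  unfolding cyl_def by auto

lemma Lalg_proj:
  assumes "finite W" "S \<subseteq> W" "D \<in> Lalg F R W B"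
  shows "{s \<in> S \<rightarrow>\<^sub>E UNIV. \<exists>b\<in>D. restrict b S = s} \<in> Lalg F R S B"
  using assms(3)
proof (rule Lalg_elim)
  fix \<phi> :: "('f,'r,'u) fml" assume h: "params \<phi> \<subseteq> B" "fv \<phi> \<subseteq> W" "D = {a \<in> W \<rightarrow>\<^sub>E UNIV. sat F R a \<phi>}"
  define ns where "ns = sorted_list_of_set (W - S)"
  have sns: "set ns = W - S" using assms(1) unfolding ns_def by simp
  let ?\<psi> = "foldr Ex ns \<phi>"
  show ?thesis
  proof (rule LalgI[of ?\<psi>])
    show "params ?\<psi> \<subseteq> B" using h by (simp add: params_exs)
    show "fv ?\<psi> \<subseteq> S" using h sns by (auto simp: fv_exs)
    show "{s \<in> S \<rightarrow>\<^sub>E UNIV. \<exists>b\<in>D. restrict b S = s} = {a \<in> S \<rightarrow>\<^sub>E UNIV. sat F R a ?\<psi>}"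
    proof (intro Collect_cong conj_cong refl)
      fix s :: "nat \<Rightarrow> 'u" assume s: "s \<in> S \<rightarrow>\<^sub>E UNIV"
      show "(\<exists>b\<in>D. restrict b S = s) = sat F R s ?\<psi>"
      proof
        assume "\<exists>b\<in>D. restrict b S = s"
        then obtain b where b: "b \<in> W \<rightarrow>\<^sub>E UNIV" "sat F R b \<phi>" "restrict b S = s" using h by auto
        have "sat F R (\<lambda>n. if n \<in> set ns then b n else s n) \<phi>"
          using b(2) h(2) b(3)[symmetric] sns by (subst sat_agree[where b=b]) auto
        then show "sat F R s ?\<psi>" by (auto simp: sat_exs)
      next
        assume "sat F R s ?\<psi>"
        then obtain g where g: "sat F R (\<lambda>n. if n \<in> set ns then g n else s n) \<phi>" by (auto simp: sat_exs)
        define b where "b = restrict (\<lambda>n. if n \<in> set ns then g n else s n) W"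
        have "sat F R b \<phi>" using g h(2) unfolding b_def by (subst sat_agree) auto
        moreover have "restrict b S = s"
          using s assms(2) sns unfolding b_def by (auto simp: restrict_def fun_eq_iff PiE_def extensional_def)
        moreover have "b \<in> W \<rightarrow>\<^sub>E UNIV" unfolding b_def by simp
        ultimately show "\<exists>b\<in>D. restrict b S = s" using h by blast
      qed
    qed
  qed
qed

end




context fixes F :: "'f \<Rightarrow> 'u list \<Rightarrow> 'u" and R :: "'r \<Rightarrow> 'u list \<Rightarrow> bool"
begin

lemma K_add: "keisler F R V B m \<Longrightarrow> D \<in> Lalg F R V B \<Longrightarrow> E \<in> Lalg F R V B \<Longrightarrow> D \<inter> E = {} \<Longrightarrow> m (D \<union> E) = m D + m E"
  unfolding keisler_def by blast

lemma K_nonneg: "keisler F R V B m \<Longrightarrow> 0 \<le> m D"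
  unfolding keisler_def by (cases "D \<in> Lalg F R V B") auto

lemma K_top: "keisler F R V B m \<Longrightarrow> m (V \<rightarrow>\<^sub>E UNIV) = 1"
  unfolding keisler_def by blast

lemma K_out: "keisler F R V B m \<Longrightarrow> D \<notin> Lalg F R V B \<Longrightarrow> m D = 0"
  unfolding keisler_def by blast

lemma K_empty: "keisler F R V B m \<Longrightarrow> m {} = 0"
  using K_add[of V B m "{}" "{}"] Lalg_empty[of F R V B] by simp

lemma K_mono: assumes "keisler F R V B m" "D \<in> Lalg F R V B" "E \<in> Lalg F R V B" "D \<subseteq> E"
  shows "m D \<le> m E"
proof -
  have "E = D \<union> (E - D)" using assms by auto
  then have "m E = m D + m (E - D)"
    using K_add[OF assms(1) assms(2) Lalg_diff[OF assms(3) assms(2)]] by auto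
  then show ?thesis using K_nonneg[OF assms(1)] by (metis le_add_same_cancel1)
qed

lemma Lalg_UN: "finite I \<Longrightarrow> (\<forall>i\<in>I. f i \<in> Lalg F R V B) \<Longrightarrow> (\<Union>i\<in>I. f i) \<in> Lalg F R V B"
proof (induction I rule: finite_induct)
  case empty then show ?case using Lalg_empty by simp
next
  case (insert i I) then show ?case by (simp add: Lalg_un)
qed

lemma K_sum:
  assumes "keisler F R V B m" "finite I" "\<forall>i\<in>I. f i \<in> Lalg F R V B"
    "\<forall>i\<in>I. \<forall>j\<in>I. i \<noteq> j \<longrightarrow> f i \<inter> f j = {}"
  shows "m (\<Union>i\<in>I. f i) = (\<Sum>i\<in>I. m (f i))"
  using assms(2-4)
proof (induction I rule: finite_induct)
  case empty then show ?case using K_empty[OF assms(1)] by simp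
next
  case (insert i I)
  have "m (\<Union>j\<in>insert i I. f j) = m (f i \<union> (\<Union>j\<in>I. f j))" by simp
  also have "\<dots> = m (f i) + m (\<Union>j\<in>I. f j)"
  proof (rule K_add[OF assms(1)])
    show "f i \<in> Lalg F R V B" using insert by simp
    show "(\<Union>j\<in>I. f j) \<in> Lalg F R V B" using insert by (intro Lalg_UN) auto
    show "f i \<inter> (\<Union>j\<in>I. f j) = {}" using insert.prems(2) insert.hyps(2) by fastforce
  qed
  finally show ?case using insert by simp
qed

lemma K_partition:
  assumes "keisler F R V B m" "finite I" "\<forall>i\<in>I. g i \<in> Lalg F R V B"
    "\<forall>i\<in>I. \<forall>j\<in>I. i \<noteq> j \<longrightarrow> g i \<inter> g j = {}" "(\<Union>i\<in>I. g i) = V \<rightarrow>\<^sub>E UNIV"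
    "X \<in> Lalg F R V B"
  shows "(\<Sum>i\<in>I. m (X \<inter> g i)) = m X"
proof -
  have "X = (\<Union>i\<in>I. X \<inter> g i)" using assms(5) Lalg_sub[OF assms(6)] by blast
  moreover have "\<forall>i\<in>I. X \<inter> g i \<in> Lalg F R V B" using assms(3,6) Lalg_int by blast
  moreover have "\<forall>i\<in>I. \<forall>j\<in>I. i \<noteq> j \<longrightarrow> (X \<inter> g i) \<inter> (X \<inter> g j) = {}" using assms(4) by blast
  ultimately show ?thesis using K_sum[OF assms(1,2), of "\<lambda>i. X \<inter> g i"] by metis
qed

end

definition atom :: "(nat \<Rightarrow> 'u) set \<Rightarrow> (nat \<Rightarrow> 'u) set set \<Rightarrow> (nat \<Rightarrow> 'u) set set \<Rightarrow> (nat \<Rightarrow> 'u) set" where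
  "atom Om Fs T = {a \<in> Om. \<forall>D\<in>Fs. a \<in> D \<longleftrightarrow> D \<in> T}"

lemma atom_disj: assumes "T \<subseteq> Fs" "T' \<subseteq> Fs" "T \<noteq> T'" shows "atom Om Fs T \<inter> atom Om Fs T' = {}"
proof (rule ccontr)
  assume "atom Om Fs T \<inter> atom Om Fs T' \<noteq> {}"
  then obtain a where a: "\<forall>D\<in>Fs. a \<in> D \<longleftrightarrow> D \<in> T" "\<forall>D\<in>Fs. a \<in> D \<longleftrightarrow> D \<in> T'" unfolding atom_def by blast
  have "T = T'" using a assms(1,2) by blast
  then show False using assms(3) by simp
qed

lemma atom_cover: "(\<Union>T\<in>Pow Fs. atom Om Fs T) = Om"
proof
  show "(\<Union>T\<in>Pow Fs. atom Om Fs T) \<subseteq> Om" unfolding atom_def by (rule UN_least) (rule Collect_subset)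
  show "Om \<subseteq> (\<Union>T\<in>Pow Fs. atom Om Fs T)"
  proof
    fix a assume "a \<in> Om"
    then have "a \<in> atom Om Fs {D\<in>Fs. a \<in> D}" unfolding atom_def by simp
    moreover have "{D\<in>Fs. a \<in> D} \<in> Pow Fs" by simp
    ultimately show "a \<in> (\<Union>T\<in>Pow Fs. atom Om Fs T)" by (rule UN_I[rotated])
  qed
qed

lemma atom_mem: "a \<in> atom Om Fs T \<longleftrightarrow> a \<in> Om \<and> (\<forall>D\<in>Fs. a \<in> D \<longleftrightarrow> D \<in> T)"
  unfolding atom_def by simp

lemma atom_in: assumes "D \<in> Fs" shows "D \<inter> atom Om Fs T = (if D \<in> T then atom Om Fs T else {})"
proof (cases "D \<in> T")
  case True
  have "atom Om Fs T \<subseteq> D"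
  proof
    fix a assume "a \<in> atom Om Fs T"
    then have "a \<in> D \<longleftrightarrow> D \<in> T" using assms unfolding atom_mem by blast
    then show "a \<in> D" using True by simp
  qed
  then show ?thesis using True by auto
next
  case False
  have "D \<inter> atom Om Fs T = {}"
  proof (rule equals0I)
    fix a assume a: "a \<in> D \<inter> atom Om Fs T"
    then have "\<forall>D\<in>Fs. a \<in> D \<longleftrightarrow> D \<in> T" by (simp add: atom_mem)
    then have "a \<in> D \<longleftrightarrow> D \<in> T" using assms by blast
    then show False using False a by simp
  qed
  then show ?thesis using False by simp
qed

lemma atom_insert: "atom Om (insert D Fs) T = atom Om Fs T \<inter> (if D \<in> T then D else Om - D)"
proof (cases "D \<in> T")
  case True
  show ?thesis
  proof (rule set_eqI)
    fix a show "a \<in> atom Om (insert D Fs) T \<longleftrightarrow> a \<in> atom Om Fs T \<inter> (if D \<in> T then D else Om - D)"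
      using True by (simp add: atom_mem) blast
  qed
next
  case False
  show ?thesis
  proof (rule set_eqI)
    fix a show "a \<in> atom Om (insert D Fs) T \<longleftrightarrow> a \<in> atom Om Fs T \<inter> (if D \<in> T then D else Om - D)"
      using False by (simp add: atom_mem) blast
  qed
qed

lemma atom_Lalg:
  fixes F :: "'f \<Rightarrow> 'u list \<Rightarrow> 'u" and R :: "'r \<Rightarrow> 'u list \<Rightarrow> bool"
  assumes "finite Fs" "Fs \<subseteq> Lalg F R V B"
  shows "atom (V \<rightarrow>\<^sub>E UNIV) Fs T \<in> Lalg F R V B"
  using assms
proof (induction Fs rule: finite_induct)
  case empty
  have "atom (V \<rightarrow>\<^sub>E UNIV) {} T = V \<rightarrow>\<^sub>E UNIV" unfolding atom_def by auto
  then show ?case using Lalg_top by metis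
next
  case (insert D Fs)
  then show ?case unfolding atom_insert by (cases "D \<in> T") (simp_all add: Lalg_int Lalg_compl)
qed




lemma K_partition2:
  fixes F :: "'f \<Rightarrow> 'u list \<Rightarrow> 'u" and R :: "'r \<Rightarrow> 'u list \<Rightarrow> bool"
  assumes "keisler F R V B m" "finite I" "\<forall>i\<in>I. g i \<in> Lalg F R V B"
    "\<forall>i\<in>I. \<forall>j\<in>I. i \<noteq> j \<longrightarrow> g i \<inter> g j = {}" "(\<Union>i\<in>I. g i) = V \<rightarrow>\<^sub>E UNIV"
    "X \<in> Lalg F R V B"
  shows "(\<Sum>i\<in>I. m (g i \<inter> X)) = m X"
  using K_partition[OF assms] by (simp add: Int_commute)

lemma mem_cyl: "a \<in> cyl V W D \<longleftrightarrow> a \<in> V \<rightarrow>\<^sub>E UNIV \<and> restrict a W \<in> D"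
  unfolding cyl_def by simp

lemma cyl_Int: "cyl V W A \<inter> cyl V W B = cyl V W (A \<inter> B)"
  unfolding cyl_def by blast

lemma cyl_UN: "(\<Union>i\<in>I. cyl V W (g i)) = cyl V W (\<Union>i\<in>I. g i)"
  unfolding cyl_def by blast

lemma cyl_empty: "cyl V W {} = {}"
  unfolding cyl_def by blast

lemma sum3_cong: "(\<And>x y z. x \<in> A \<Longrightarrow> y \<in> B \<Longrightarrow> z \<in> C \<Longrightarrow> f x y z = g x y z) \<Longrightarrow>
  (\<Sum>x\<in>A. \<Sum>y\<in>B. \<Sum>z\<in>C. f x y z) = (\<Sum>x\<in>A. \<Sum>y\<in>B. \<Sum>z\<in>C. (g x y z :: real))"
  by (intro sum.cong refl) auto

lemma sum3_mono: "(\<And>x y z. x \<in> A \<Longrightarrow> y \<in> B \<Longrightarrow> z \<in> C \<Longrightarrow> f x y z \<le> g x y z) \<Longrightarrow>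
  (\<Sum>x\<in>A. \<Sum>y\<in>B. \<Sum>z\<in>C. f x y z) \<le> (\<Sum>x\<in>A. \<Sum>y\<in>B. \<Sum>z\<in>C. (g x y z :: real))"
  by (intro sum_mono) auto

lemma finite_ext:
  fixes F :: "'f \<Rightarrow> 'u list \<Rightarrow> 'u" and R :: "'r \<Rightarrow> 'u list \<Rightarrow> bool"
  assumes fin: "finite W'" and WV: "W \<union> W' = V" and S: "S = W \<inter> W'"
    and kw: "keisler F R W P \<omega>" and kw': "keisler F R W' Q \<rho>" and QP: "Q \<subseteq> P"
    and compat: "\<forall>\<gamma>\<in>Lalg F R S Q. \<omega> (cyl W S \<gamma>) = \<rho> (cyl W' S \<gamma>)"
    and F1: "finite F1" "F1 \<subseteq> Lalg F R W P" and F2: "finite F2" "F2 \<subseteq> Lalg F R W' Q"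
  shows "\<exists>m. (\<forall>D E. D \<inter> E = {} \<longrightarrow> m (D \<union> E) = m D + m E) \<and> (\<forall>D. 0 \<le> m D) \<and> (\<forall>D. m D \<le> 1)
     \<and> (\<forall>D\<in>F1. m (cyl V W D) = \<omega> D) \<and> (\<forall>D\<in>F2. m (cyl V W' D) = \<rho> D)"
proof -
  define Ow :: "(nat \<Rightarrow> 'u) set" where "Ow = W \<rightarrow>\<^sub>E UNIV"
  define Ow' :: "(nat \<Rightarrow> 'u) set" where "Ow' = W' \<rightarrow>\<^sub>E UNIV"
  define Os :: "(nat \<Rightarrow> 'u) set" where "Os = S \<rightarrow>\<^sub>E UNIV"
  define F1' where "F1' = insert Ow F1"
  have F1': "finite F1'" "F1' \<subseteq> Lalg F R W P" using F1 Lalg_top unfolding F1'_def Ow_def by auto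
  have SW: "S \<subseteq> W" and SW': "S \<subseteq> W'" and WsV: "W \<subseteq> V" and W'sV: "W' \<subseteq> V" using S WV by auto
  define prj where "prj X = {s \<in> Os. \<exists>b\<in>X. restrict b S = s}" for X
  define E where "E T2 = prj (atom Ow' F2 T2)" for T2
  define EE where "EE = E ` Pow F2"
  define \<gamma> where "\<gamma> \<tau> = atom Os EE \<tau>" for \<tau>
  define \<alpha> where "\<alpha> T1 \<tau> = atom Ow F1' T1 \<inter> cyl W S (\<gamma> \<tau>)" for T1 \<tau>
  define \<beta> where "\<beta> T2 \<tau> = atom Ow' F2 T2 \<inter> cyl W' S (\<gamma> \<tau>)" for T2 \<tau>
  define c where "c \<tau> = \<omega> (cyl W S (\<gamma> \<tau>))" for \<tau>
  define wt where "wt T1 \<tau> T2 = \<omega> (\<alpha> T1 \<tau>) * \<rho> (\<beta> T2 \<tau>) / c \<tau>" for T1 \<tau> T2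
  define pt where "pt T1 \<tau> T2 = (SOME p. p \<in> V \<rightarrow>\<^sub>E UNIV \<and> restrict p W \<in> \<alpha> T1 \<tau> \<and> restrict p W' \<in> \<beta> T2 \<tau>)" for T1 \<tau> T2
  define m where "m X = (\<Sum>T1\<in>Pow F1'. \<Sum>\<tau>\<in>Pow EE. \<Sum>T2\<in>Pow F2. wt T1 \<tau> T2 * (if pt T1 \<tau> T2 \<in> X then 1 else 0))" for X

  have atomF2: "atom Ow' F2 T2 \<in> Lalg F R W' Q" for T2 unfolding Ow'_def using F2 by (rule atom_Lalg)
  have atomF1: "atom Ow F1' T1 \<in> Lalg F R W P" for T1 unfolding Ow_def using F1' by (rule atom_Lalg)
  have EL: "E T2 \<in> Lalg F R S Q" for T2
    unfolding E_def prj_def Os_def Ow'_def using Lalg_proj[OF fin SW' atomF2[unfolded Ow'_def]] by simp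
  have EE: "finite EE" "EE \<subseteq> Lalg F R S Q" using F2 EL unfolding EE_def by auto
  have \<gamma>L: "\<gamma> \<tau> \<in> Lalg F R S Q" for \<tau> unfolding \<gamma>_def Os_def using EE by (rule atom_Lalg)
  have c\<gamma>W: "cyl W S (\<gamma> \<tau>) \<in> Lalg F R W P" for \<tau>
    using Lalg_cyl[OF SW \<gamma>L] Lalg_mono[OF QP] by blast
  have c\<gamma>W': "cyl W' S (\<gamma> \<tau>) \<in> Lalg F R W' Q" for \<tau>
    using Lalg_cyl[OF SW' \<gamma>L] by blast
  have \<alpha>L: "\<alpha> T1 \<tau> \<in> Lalg F R W P" for T1 \<tau> unfolding \<alpha>_def by (intro Lalg_int atomF1 c\<gamma>W)
  have \<beta>L: "\<beta> T2 \<tau> \<in> Lalg F R W' Q" for T2 \<tau> unfolding \<beta>_def by (intro Lalg_int atomF2 c\<gamma>W')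
  have c\<rho>: "c \<tau> = \<rho> (cyl W' S (\<gamma> \<tau>))" for \<tau> unfolding c_def using compat \<gamma>L by blast
  have cnn: "0 \<le> c \<tau>" for \<tau> unfolding c_def using K_nonneg[OF kw] .
  have \<alpha>le: "\<omega> (\<alpha> T1 \<tau>) \<le> c \<tau>" for T1 \<tau>
    unfolding c_def by (rule K_mono[OF kw \<alpha>L c\<gamma>W]) (auto simp: \<alpha>_def)
  have \<beta>le: "\<rho> (\<beta> T2 \<tau>) \<le> c \<tau>" for T2 \<tau>
    unfolding c\<rho> by (rule K_mono[OF kw' \<beta>L c\<gamma>W']) (auto simp: \<beta>_def)
  have wnn: "0 \<le> wt T1 \<tau> T2" for T1 \<tau> T2
    unfolding wt_def using K_nonneg[OF kw] K_nonneg[OF kw'] cnn by simp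

  have \<gamma>disj: "\<forall>i\<in>Pow EE. \<forall>j\<in>Pow EE. i \<noteq> j \<longrightarrow> \<gamma> i \<inter> \<gamma> j = {}"
    unfolding \<gamma>_def using atom_disj by blast
  have \<gamma>cov: "(\<Union>\<tau>\<in>Pow EE. \<gamma> \<tau>) = Os" unfolding \<gamma>_def by (rule atom_cover)
  have cyl\<gamma>disj: "\<forall>i\<in>Pow EE. \<forall>j\<in>Pow EE. i \<noteq> j \<longrightarrow> cyl V' S (\<gamma> i) \<inter> cyl V' S (\<gamma> j) = {}" for V'
    using \<gamma>disj by (simp add: cyl_Int cyl_empty)
  have cyl\<gamma>cov: "S \<subseteq> V' \<Longrightarrow> (\<Union>\<tau>\<in>Pow EE. cyl V' S (\<gamma> \<tau>)) = V' \<rightarrow>\<^sub>E UNIV" for V'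
    by (simp add: cyl_UN \<gamma>cov Os_def cyl_top)
  have sum\<alpha>\<tau>: "(\<Sum>\<tau>\<in>Pow EE. \<omega> (\<alpha> T1 \<tau>)) = \<omega> (atom Ow F1' T1)" for T1
    unfolding \<alpha>_def using EE(1) c\<gamma>W cyl\<gamma>disj cyl\<gamma>cov[OF SW] atomF1
    by (intro K_partition[OF kw]) auto
  have sum\<beta>\<tau>: "(\<Sum>\<tau>\<in>Pow EE. \<rho> (\<beta> T2 \<tau>)) = \<rho> (atom Ow' F2 T2)" for T2
    unfolding \<beta>_def using EE(1) c\<gamma>W' cyl\<gamma>disj cyl\<gamma>cov[OF SW'] atomF2
    by (intro K_partition[OF kw']) auto
  have sum\<alpha>T: "(\<Sum>T1\<in>Pow F1'. \<omega> (\<alpha> T1 \<tau>)) = c \<tau>" for \<tau>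
    unfolding \<alpha>_def c_def using F1'(1) atomF1 atom_disj[where Fs=F1' and Om=Ow] atom_cover[where Fs=F1' and Om=Ow] c\<gamma>W
    by (intro K_partition2[OF kw]) (auto simp: Ow_def)
  have sum\<beta>T: "(\<Sum>T2\<in>Pow F2. \<rho> (\<beta> T2 \<tau>)) = c \<tau>" for \<tau>
    unfolding \<beta>_def c\<rho> using F2(1) atomF2 atom_disj[where Fs=F2 and Om=Ow'] atom_cover[where Fs=F2 and Om=Ow'] c\<gamma>W'
    by (intro K_partition2[OF kw']) (auto simp: Ow'_def)
  have sumD1: "(\<Sum>T1\<in>Pow F1'. if D \<in> T1 then \<omega> (atom Ow F1' T1) else 0) = \<omega> D" if D: "D \<in> F1'" for D
  proof -
    have "(\<Sum>T1\<in>Pow F1'. \<omega> (D \<inter> atom Ow F1' T1)) = \<omega> D"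
      using F1'(1) atomF1 atom_disj[where Fs=F1' and Om=Ow] atom_cover[where Fs=F1' and Om=Ow] D F1'(2)
      by (intro K_partition[OF kw]) (auto simp: Ow_def)
    moreover have "\<omega> (D \<inter> atom Ow F1' T1) = (if D \<in> T1 then \<omega> (atom Ow F1' T1) else 0)" for T1
      using atom_in[OF D, of Ow T1] K_empty[OF kw] by simp
    ultimately show ?thesis by simp
  qed
  have sumD2: "(\<Sum>T2\<in>Pow F2. if D \<in> T2 then \<rho> (atom Ow' F2 T2) else 0) = \<rho> D" if D: "D \<in> F2" for D
  proof -
    have "(\<Sum>T2\<in>Pow F2. \<rho> (D \<inter> atom Ow' F2 T2)) = \<rho> D"
      using F2(1) atomF2 atom_disj[where Fs=F2 and Om=Ow'] atom_cover[where Fs=F2 and Om=Ow'] D F2(2)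
      by (intro K_partition[OF kw']) (auto simp: Ow'_def)
    moreover have "\<rho> (D \<inter> atom Ow' F2 T2) = (if D \<in> T2 then \<rho> (atom Ow' F2 T2) else 0)" for T2
      using atom_in[OF D, of Ow' T2] K_empty[OF kw'] by simp
    ultimately show ?thesis by simp
  qed
  have in1: "(\<Sum>T2\<in>Pow F2. wt T1 \<tau> T2) = \<omega> (\<alpha> T1 \<tau>)" for T1 \<tau>
  proof (cases "c \<tau> = 0")
    case True
    then have "\<omega> (\<alpha> T1 \<tau>) = 0" using \<alpha>le[of T1 \<tau>] K_nonneg[OF kw] by (metis order_antisym)
    then show ?thesis unfolding wt_def by simp
  next
    case False
    have "(\<Sum>T2\<in>Pow F2. wt T1 \<tau> T2) = \<omega> (\<alpha> T1 \<tau>) * (\<Sum>T2\<in>Pow F2. \<rho> (\<beta> T2 \<tau>)) / c \<tau>"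
      unfolding wt_def by (simp add: sum_distrib_left sum_divide_distrib)
    then show ?thesis using False sum\<beta>T by simp
  qed
  have in2: "(\<Sum>T1\<in>Pow F1'. wt T1 \<tau> T2) = \<rho> (\<beta> T2 \<tau>)" for T2 \<tau>
  proof (cases "c \<tau> = 0")
    case True
    then have "\<rho> (\<beta> T2 \<tau>) = 0" using \<beta>le[of T2 \<tau>] K_nonneg[OF kw'] by (metis order_antisym)
    then show ?thesis unfolding wt_def by simp
  next
    case False
    have "(\<Sum>T1\<in>Pow F1'. wt T1 \<tau> T2) = (\<Sum>T1\<in>Pow F1'. \<omega> (\<alpha> T1 \<tau>)) * \<rho> (\<beta> T2 \<tau>) / c \<tau>"
      unfolding wt_def by (simp add: sum_distrib_right sum_divide_distrib)
    then show ?thesis using False sum\<alpha>T by simp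
  qed

  have pt_ok: "pt T1 \<tau> T2 \<in> V \<rightarrow>\<^sub>E UNIV \<and> restrict (pt T1 \<tau> T2) W \<in> \<alpha> T1 \<tau> \<and> restrict (pt T1 \<tau> T2) W' \<in> \<beta> T2 \<tau>"
    if T2: "T2 \<in> Pow F2" and nz: "wt T1 \<tau> T2 \<noteq> 0" for T1 \<tau> T2
  proof -
    have "\<omega> (\<alpha> T1 \<tau>) \<noteq> 0" "\<rho> (\<beta> T2 \<tau>) \<noteq> 0" using nz unfolding wt_def by auto
    then have "\<alpha> T1 \<tau> \<noteq> {}" "\<beta> T2 \<tau> \<noteq> {}" using K_empty[OF kw] K_empty[OF kw'] by auto
    then obtain a b where a: "a \<in> \<alpha> T1 \<tau>" and b: "b \<in> \<beta> T2 \<tau>" by blast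
    have "a \<in> cyl W S (\<gamma> \<tau>)" using a by (simp add: \<alpha>_def)
    then have aW: "a \<in> W \<rightarrow>\<^sub>E UNIV" and a\<gamma>: "restrict a S \<in> \<gamma> \<tau>" by (simp_all add: mem_cyl)
    have bA: "b \<in> atom Ow' F2 T2" using b by (simp add: \<beta>_def)
    have "b \<in> cyl W' S (\<gamma> \<tau>)" using b by (simp add: \<beta>_def)
    then have b\<gamma>: "restrict b S \<in> \<gamma> \<tau>" by (simp add: mem_cyl)
    have bW': "b \<in> W' \<rightarrow>\<^sub>E UNIV" using bA unfolding atom_mem Ow'_def by blast
    have ET: "E T2 \<in> EE" using T2 unfolding EE_def by blast
    have "restrict b S \<in> E T2" unfolding E_def prj_def Os_def using bA by auto
    moreover have "restrict b S \<in> E T2 \<longleftrightarrow> E T2 \<in> \<tau>" using b\<gamma> ET unfolding \<gamma>_def atom_mem by blast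
    moreover have "restrict a S \<in> E T2 \<longleftrightarrow> E T2 \<in> \<tau>" using a\<gamma> ET unfolding \<gamma>_def atom_mem by blast
    ultimately have "restrict a S \<in> E T2" by blast
    then obtain b' where b'A: "b' \<in> atom Ow' F2 T2" and b'S: "restrict b' S = restrict a S"
      unfolding E_def prj_def by blast
    have b'W': "b' \<in> W' \<rightarrow>\<^sub>E UNIV" using b'A unfolding atom_mem Ow'_def by blast
    have "b' \<in> cyl W' S (\<gamma> \<tau>)" using b'W' b'S a\<gamma> by (simp add: mem_cyl)
    then have b'\<beta>: "b' \<in> \<beta> T2 \<tau>" using b'A by (simp add: \<beta>_def)
    define p where "p = restrict (\<lambda>n. if n \<in> W then a n else b' n) V"
    have pV: "p \<in> V \<rightarrow>\<^sub>E UNIV" unfolding p_def by simp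
    have pW: "restrict p W = a"
    proof
      fix n show "restrict p W n = a n"
        using aW WsV unfolding p_def by (cases "n \<in> W") (auto simp: PiE_def extensional_def)
    qed
    have pW': "restrict p W' = b'"
    proof
      fix n show "restrict p W' n = b' n"
      proof (cases "n \<in> W'")
        case True
        show ?thesis
        proof (cases "n \<in> W")
          case True': True
          then have "n \<in> S" using True S by blast
          then have "a n = b' n" using b'S by (metis restrict_apply')
          then show ?thesis using True True' W'sV unfolding p_def by auto
        next
          case False
          then show ?thesis using True W'sV unfolding p_def by auto
        qed
      next
        case False
        then show ?thesis using b'W' unfolding p_def by (auto simp: PiE_def extensional_def)
      qed
    qed
    have "\<exists>p. p \<in> V \<rightarrow>\<^sub>E UNIV \<and> restrict p W \<in> \<alpha> T1 \<tau> \<and> restrict p W' \<in> \<beta> T2 \<tau>"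
      using pV pW pW' a b'\<beta> by metis
    then show ?thesis unfolding pt_def by (rule someI_ex)
  qed

  have m1: "m (cyl V W D) = \<omega> D" if D: "D \<in> F1'" for D
  proof -
    have "m (cyl V W D) = (\<Sum>T1\<in>Pow F1'. \<Sum>\<tau>\<in>Pow EE. \<Sum>T2\<in>Pow F2. if D \<in> T1 then wt T1 \<tau> T2 else 0)"
      unfolding m_def
    proof (rule sum3_cong)
      fix T1 \<tau> T2 assume T1: "T1 \<in> Pow F1'" and T2: "T2 \<in> Pow F2"
      show "wt T1 \<tau> T2 * (if pt T1 \<tau> T2 \<in> cyl V W D then 1 else 0) = (if D \<in> T1 then wt T1 \<tau> T2 else 0)"
      proof (cases "wt T1 \<tau> T2 = 0")
        case False
        note ok = pt_ok[OF T2 False]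
        then have "restrict (pt T1 \<tau> T2) W \<in> atom Ow F1' T1" unfolding \<alpha>_def by blast
        then have "restrict (pt T1 \<tau> T2) W \<in> D \<longleftrightarrow> D \<in> T1" using D unfolding atom_mem by blast
        then show ?thesis using ok unfolding mem_cyl by simp
      qed simp
    qed
    also have "\<dots> = (\<Sum>T1\<in>Pow F1'. if D \<in> T1 then \<omega> (atom Ow F1' T1) else 0)"
      by (intro sum.cong refl) (simp add: in1 sum\<alpha>\<tau>)
    also have "\<dots> = \<omega> D" using sumD1[OF D] .
    finally show ?thesis .
  qed
  have m2: "m (cyl V W' D) = \<rho> D" if D: "D \<in> F2" for D
  proof -
    have "m (cyl V W' D) = (\<Sum>T1\<in>Pow F1'. \<Sum>\<tau>\<in>Pow EE. \<Sum>T2\<in>Pow F2. if D \<in> T2 then wt T1 \<tau> T2 else 0)"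
      unfolding m_def
    proof (rule sum3_cong)
      fix T1 \<tau> T2 assume T1: "T1 \<in> Pow F1'" and T2: "T2 \<in> Pow F2"
      show "wt T1 \<tau> T2 * (if pt T1 \<tau> T2 \<in> cyl V W' D then 1 else 0) = (if D \<in> T2 then wt T1 \<tau> T2 else 0)"
      proof (cases "wt T1 \<tau> T2 = 0")
        case False
        note ok = pt_ok[OF T2 False]
        then have "restrict (pt T1 \<tau> T2) W' \<in> atom Ow' F2 T2" unfolding \<beta>_def by blast
        then have "restrict (pt T1 \<tau> T2) W' \<in> D \<longleftrightarrow> D \<in> T2" using D unfolding atom_mem by blast
        then show ?thesis using ok unfolding mem_cyl by simp
      qed simp
    qed
    also have "\<dots> = (\<Sum>\<tau>\<in>Pow EE. \<Sum>T1\<in>Pow F1'. \<Sum>T2\<in>Pow F2. if D \<in> T2 then wt T1 \<tau> T2 else 0)"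
      by (rule sum.swap)
    also have "\<dots> = (\<Sum>\<tau>\<in>Pow EE. \<Sum>T2\<in>Pow F2. \<Sum>T1\<in>Pow F1'. if D \<in> T2 then wt T1 \<tau> T2 else 0)"
      by (intro sum.cong refl sum.swap)
    also have "\<dots> = (\<Sum>T2\<in>Pow F2. \<Sum>\<tau>\<in>Pow EE. \<Sum>T1\<in>Pow F1'. if D \<in> T2 then wt T1 \<tau> T2 else 0)"
      by (rule sum.swap)
    also have "\<dots> = (\<Sum>T2\<in>Pow F2. if D \<in> T2 then \<rho> (atom Ow' F2 T2) else 0)"
      by (intro sum.cong refl) (simp add: in2 sum\<beta>\<tau>)
    also have "\<dots> = \<rho> D" using sumD2[OF D] .
    finally show ?thesis .
  qed
  have madd: "m (D \<union> E') = m D + m E'" if "D \<inter> E' = {}" for D E'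
  proof -
    have "m (D \<union> E') = (\<Sum>T1\<in>Pow F1'. \<Sum>\<tau>\<in>Pow EE. \<Sum>T2\<in>Pow F2.
        wt T1 \<tau> T2 * (if pt T1 \<tau> T2 \<in> D then 1 else 0) + wt T1 \<tau> T2 * (if pt T1 \<tau> T2 \<in> E' then 1 else 0))"
      unfolding m_def by (rule sum3_cong) (use that in auto)
    then show ?thesis unfolding m_def by (simp add: sum.distrib)
  qed
  have mnn: "0 \<le> m D" for D unfolding m_def using wnn by (intro sum_nonneg) auto
  have mtop: "m (V \<rightarrow>\<^sub>E UNIV) = 1"
  proof -
    have "Ow \<in> F1'" unfolding F1'_def by simp
    from m1[OF this] show ?thesis using K_top[OF kw] cyl_top[OF WsV] unfolding Ow_def by metis
  qed
  have mle: "m D \<le> 1" for D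
  proof -
    have "m D \<le> m (V \<rightarrow>\<^sub>E UNIV)" unfolding m_def
    proof (rule sum3_mono)
      fix T1 \<tau> T2 assume T2: "T2 \<in> Pow F2"
      show "wt T1 \<tau> T2 * (if pt T1 \<tau> T2 \<in> D then 1 else 0) \<le> wt T1 \<tau> T2 * (if pt T1 \<tau> T2 \<in> V \<rightarrow>\<^sub>E UNIV then 1 else 0)"
      proof (cases "wt T1 \<tau> T2 = 0")
        case False
        then show ?thesis using pt_ok[OF T2 False] wnn[of T1 \<tau> T2] by simp
      qed simp
    qed
    then show ?thesis using mtop by simp
  qed
  show ?thesis
    using madd mnn mle m1 m2 unfolding F1'_def by blast
qed




lemma compact_ext:
  fixes L :: "'a set set" and Cs :: "('a set \<times> real) set"
  assumes Cs: "\<forall>p\<in>Cs. fst p \<in> L"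
    and fin: "\<And>K. finite K \<Longrightarrow> K \<subseteq> Cs \<Longrightarrow> \<exists>m. (\<forall>D E. D \<inter> E = {} \<longrightarrow> m (D \<union> E) = m D + m E)
                 \<and> (\<forall>D. 0 \<le> m D \<and> m D \<le> 1) \<and> (\<forall>p\<in>K. m (fst p) = snd p)"
  shows "\<exists>m. (\<forall>D\<in>L. \<forall>E\<in>L. D \<inter> E = {} \<longrightarrow> D \<union> E \<in> L \<longrightarrow> m (D \<union> E) = m D + m E)
           \<and> (\<forall>D\<in>L. 0 \<le> m D \<and> m D \<le> 1) \<and> (\<forall>p\<in>Cs. m (fst p) = snd p)"
proof -
  define X where "X = product_topology (\<lambda>_. top_of_set {0..1::real}) L"
  have top: "topspace X = L \<rightarrow>\<^sub>E {0..1}" unfolding X_def by simp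
  have comp: "compact_space X"
    unfolding X_def compact_space_product_topology
    by (simp add: compact_space_subtopology)
  have proj: "continuous_map X euclideanreal (\<lambda>m. m k)" if "k \<in> L" for k
  proof -
    have "continuous_map X (top_of_set {0..1}) (\<lambda>m. m k)"
      unfolding X_def using that by (rule continuous_map_product_projection)
    then show ?thesis by (simp add: continuous_map_in_subtopology)
  qed
  define Cadd where "Cadd p = {m \<in> topspace X. m (fst p \<union> snd p) = m (fst p) + m (snd p)}" for p
  define Ccon where "Ccon p = {m \<in> topspace X. m (fst p) = snd p}" for p
  define Pairs where "Pairs = {p. fst p \<in> L \<and> snd p \<in> L \<and> fst p \<inter> snd p = {} \<and> fst p \<union> snd p \<in> L}"
  define U where "U = insert (topspace X) (Cadd ` Pairs \<union> Ccon ` Cs)"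
  have closed: "\<forall>C\<in>U. closedin X C"
  proof
    fix C assume "C \<in> U"
    then consider "C = topspace X" | p where "p \<in> Pairs" "C = Cadd p" | p where "p \<in> Cs" "C = Ccon p"
      unfolding U_def by blast
    then show "closedin X C"
    proof cases
      case 1 then show ?thesis by simp
    next
      case (2 p)
      have "continuous_map X euclideanreal (\<lambda>m. m (fst p \<union> snd p) - m (fst p) - m (snd p))"
        using 2 unfolding Pairs_def by (intro continuous_map_diff proj) auto
      then have "closedin X {m \<in> topspace X. m (fst p \<union> snd p) - m (fst p) - m (snd p) \<in> {0}}"
        by (rule closedin_continuous_map_preimage) simp
      moreover have "{m \<in> topspace X. m (fst p \<union> snd p) - m (fst p) - m (snd p) \<in> {0}} = C"
        unfolding 2 Cadd_def by auto
      ultimately show ?thesis by simp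
    next
      case (3 p)
      have "closedin X {m \<in> topspace X. m (fst p) \<in> {snd p}}"
        using 3 Cs by (intro closedin_continuous_map_preimage[OF proj]) auto
      moreover have "{m \<in> topspace X. m (fst p) \<in> {snd p}} = C" unfolding 3 Ccon_def by auto
      ultimately show ?thesis by simp
    qed
  qed
  have fip: "\<forall>\<F>. finite \<F> \<and> \<F> \<subseteq> U \<longrightarrow> \<Inter>\<F> \<noteq> {}"
  proof (intro allI impI)
    fix \<F> assume h: "finite \<F> \<and> \<F> \<subseteq> U"
    have "finite (\<F> \<inter> Ccon ` Cs)" "\<F> \<inter> Ccon ` Cs \<subseteq> Ccon ` Cs" using h by auto
    then obtain K where K: "K \<subseteq> Cs" "finite K" "\<F> \<inter> Ccon ` Cs = Ccon ` K"
      using finite_subset_image by metis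
    obtain m where m: "\<forall>D E. D \<inter> E = {} \<longrightarrow> m (D \<union> E) = m D + m E"
      "\<forall>D. 0 \<le> m D \<and> m D \<le> 1" "\<forall>p\<in>K. m (fst p) = snd p"
      using fin[OF K(2,1)] by blast
    define m' where "m' = restrict m L"
    have m'top: "m' \<in> topspace X" unfolding top m'_def using m(2) by auto
    have "m' \<in> C" if "C \<in> \<F>" for C
    proof -
      have "C \<in> U" using h that by blast
      then consider "C = topspace X" | p where "p \<in> Pairs" "C = Cadd p" | p where "p \<in> Cs" "C = Ccon p"
        unfolding U_def by blast
      then show ?thesis
      proof cases
        case 1 then show ?thesis using m'top by simp
      next
        case (2 p)
        then show ?thesis using m'top m(1) unfolding Cadd_def Pairs_def m'_def by auto
      next
        case (3 p)
        then have "C \<in> Ccon ` K" using K(3) that by blast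
        then obtain q where q: "q \<in> K" "C = Ccon q" by blast
        then have "fst q \<in> L" using K(1) Cs by blast
        then show ?thesis using q m(3) m'top unfolding Ccon_def m'_def by auto
      qed
    qed
    then show "\<Inter>\<F> \<noteq> {}" by blast
  qed
  have H: "\<forall>\<U>. (\<forall>C\<in>\<U>. closedin X C) \<and> (\<forall>\<F>. finite \<F> \<and> \<F> \<subseteq> \<U> \<longrightarrow> \<Inter>\<F> \<noteq> {}) \<longrightarrow> \<Inter>\<U> \<noteq> {}"
    using comp by (simp only: compact_space_fip)
  have "\<Inter>U \<noteq> {}" by (rule H[rule_format, OF conjI[OF closed fip]])
  then obtain m where m: "m \<in> \<Inter>U" by blast
  have mtop: "m \<in> topspace X" using m unfolding U_def by blast
  show ?thesis
  proof (intro exI conjI ballI impI)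
    fix D E assume "D \<in> L" "E \<in> L" "D \<inter> E = {}" "D \<union> E \<in> L"
    then have "(D, E) \<in> Pairs" unfolding Pairs_def by simp
    then have "m \<in> Cadd (D, E)" using m unfolding U_def by blast
    then show "m (D \<union> E) = m D + m E" unfolding Cadd_def by simp
  next
    fix D assume "D \<in> L"
    then have "m D \<in> {0..1}" using mtop unfolding top by (simp add: PiE_iff)
    then show "0 \<le> m D" "m D \<le> 1" by simp_all
  next
    fix p assume "p \<in> Cs"
    then have "m \<in> Ccon p" using m unfolding U_def by blast
    then show "m (fst p) = snd p" unfolding Ccon_def by simp
  qed
qed




lemma cyl_Un: "cyl V W (D \<union> E) = cyl V W D \<union> cyl V W E"
  unfolding cyl_def by blast

context fixes F :: "'f \<Rightarrow> 'u list \<Rightarrow> 'u" and R :: "'r \<Rightarrow> 'u list \<Rightarrow> bool"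
begin

lemma ext_measure:
  assumes fin: "finite W'" and WV: "W \<union> W' = V" and S: "S = W \<inter> W'"
    and kw: "keisler F R W P \<omega>" and kw': "keisler F R W' Q \<rho>" and QP: "Q \<subseteq> P"
    and compat: "\<forall>\<gamma>\<in>Lalg F R S Q. \<omega> (cyl W S \<gamma>) = \<rho> (cyl W' S \<gamma>)"
  shows "\<exists>\<Omega>. keisler F R V P \<Omega> \<and> (\<forall>D\<in>Lalg F R W P. \<Omega> (cyl V W D) = \<omega> D)
            \<and> (\<forall>D\<in>Lalg F R W' Q. \<Omega> (cyl V W' D) = \<rho> D)"
proof -
  have WsV: "W \<subseteq> V" and W'sV: "W' \<subseteq> V" using WV by auto
  define L where "L = Lalg F R V P"
  define C1 where "C1 = (\<lambda>D. (cyl V W D, \<omega> D)) ` Lalg F R W P"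
  define C2 where "C2 = (\<lambda>D. (cyl V W' D, \<rho> D)) ` Lalg F R W' Q"
  have Cs: "\<forall>p\<in>C1 \<union> C2. fst p \<in> L"
  proof
    fix p assume "p \<in> C1 \<union> C2"
    then consider D where "D \<in> Lalg F R W P" "p = (cyl V W D, \<omega> D)" | D where "D \<in> Lalg F R W' Q" "p = (cyl V W' D, \<rho> D)"
      unfolding C1_def C2_def by blast
    then show "fst p \<in> L"
    proof cases
      case 1 then show ?thesis unfolding L_def using Lalg_cyl[OF WsV 1(1)] by simp
    next
      case 2 then show ?thesis unfolding L_def using Lalg_cyl[OF W'sV 2(1)] Lalg_mono[OF QP] by auto
    qed
  qed
  have fin': "\<exists>m. (\<forall>D E. D \<inter> E = {} \<longrightarrow> m (D \<union> E) = m D + m E)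
                 \<and> (\<forall>D. 0 \<le> m D \<and> m D \<le> 1) \<and> (\<forall>p\<in>K. m (fst p) = snd p)"
    if K: "finite K" "K \<subseteq> C1 \<union> C2" for K
  proof -
    have "finite (K \<inter> C1)" "K \<inter> C1 \<subseteq> (\<lambda>D. (cyl V W D, \<omega> D)) ` Lalg F R W P" using K(1) unfolding C1_def by simp_all
    from finite_subset_image[OF this] obtain F1 where F1: "F1 \<subseteq> Lalg F R W P" "finite F1" "K \<inter> C1 = (\<lambda>D. (cyl V W D, \<omega> D)) ` F1"
      by blast
    have "finite (K \<inter> C2)" "K \<inter> C2 \<subseteq> (\<lambda>D. (cyl V W' D, \<rho> D)) ` Lalg F R W' Q" using K(1) unfolding C2_def by simp_all
    from finite_subset_image[OF this] obtain F2 where F2: "F2 \<subseteq> Lalg F R W' Q" "finite F2" "K \<inter> C2 = (\<lambda>D. (cyl V W' D, \<rho> D)) ` F2"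
      by blast
    obtain m where m: "\<forall>D E. D \<inter> E = {} \<longrightarrow> m (D \<union> E) = m D + m E" "\<forall>D. 0 \<le> m D" "\<forall>D. m D \<le> 1"
      "\<forall>D\<in>F1. m (cyl V W D) = \<omega> D" "\<forall>D\<in>F2. m (cyl V W' D) = \<rho> D"
      using finite_ext[OF fin WV S kw kw' QP compat F1(2,1) F2(2,1)] by (elim exE conjE) (intro that)
    have "\<forall>p\<in>K. m (fst p) = snd p"
    proof
      fix p assume p: "p \<in> K"
      then have "p \<in> K \<inter> C1 \<or> p \<in> K \<inter> C2" using K by blast
      then show "m (fst p) = snd p"
      proof
        assume "p \<in> K \<inter> C1" then obtain D where "D \<in> F1" "p = (cyl V W D, \<omega> D)" using F1(3) by blast
        then show ?thesis using m(4) by simp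
      next
        assume "p \<in> K \<inter> C2" then obtain D where "D \<in> F2" "p = (cyl V W' D, \<rho> D)" using F2(3) by blast
        then show ?thesis using m(5) by simp
      qed
    qed
    then show ?thesis using m(1-3) by blast
  qed
  obtain m where m: "\<forall>D\<in>L. \<forall>E\<in>L. D \<inter> E = {} \<longrightarrow> D \<union> E \<in> L \<longrightarrow> m (D \<union> E) = m D + m E"
    "\<forall>D\<in>L. 0 \<le> m D \<and> m D \<le> 1" "\<forall>p\<in>C1 \<union> C2. m (fst p) = snd p"
    using compact_ext[OF Cs fin'] by blast
  define \<Omega> where "\<Omega> D = (if D \<in> L then m D else 0)" for D
  have c1: "\<Omega> (cyl V W D) = \<omega> D" if "D \<in> Lalg F R W P" for D
  proof -
    have "(cyl V W D, \<omega> D) \<in> C1" using that unfolding C1_def by blast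
    then have "m (cyl V W D) = \<omega> D" "cyl V W D \<in> L" using m(3) Cs by (metis UnI1 fst_conv snd_conv)+
    then show ?thesis unfolding \<Omega>_def by simp
  qed
  have c2: "\<Omega> (cyl V W' D) = \<rho> D" if "D \<in> Lalg F R W' Q" for D
  proof -
    have "(cyl V W' D, \<rho> D) \<in> C2" using that unfolding C2_def by blast
    then have "m (cyl V W' D) = \<rho> D" "cyl V W' D \<in> L" using m(3) Cs by (metis UnI2 fst_conv snd_conv)+
    then show ?thesis unfolding \<Omega>_def by simp
  qed
  have "keisler F R V P \<Omega>"
    unfolding keisler_def
  proof (intro conjI allI impI ballI)
    fix D assume "D \<notin> Lalg F R V P" then show "\<Omega> D = 0" unfolding \<Omega>_def L_def by simp
  next
    fix D assume "D \<in> Lalg F R V P" then show "0 \<le> \<Omega> D" using m(2) unfolding \<Omega>_def L_def by simp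
  next
    have "\<Omega> (cyl V W (W \<rightarrow>\<^sub>E UNIV)) = 1" using c1[OF Lalg_top] K_top[OF kw] by simp
    then show "\<Omega> (V \<rightarrow>\<^sub>E UNIV) = 1" using cyl_top[OF WsV] by metis
  next
    fix D E assume h: "D \<in> Lalg F R V P" "E \<in> Lalg F R V P" "D \<inter> E = {}"
    have "D \<union> E \<in> L" unfolding L_def by (rule Lalg_un[OF h(1,2)])
    then show "\<Omega> (D \<union> E) = \<Omega> D + \<Omega> E" using h m(1) unfolding \<Omega>_def L_def by simp
  qed
  then show ?thesis using c1 c2 by blast
qed

lemma proj_unf: "D \<in> Lalg F R W B \<Longrightarrow> proj F R V W B \<Omega> D = \<Omega> (cyl V W D)"
  unfolding proj_def cyl_def by simp

lemma proj_cyl: assumes "S \<subseteq> W" "D \<in> Lalg F R S B" shows "proj F R V W B \<Omega> (cyl W S D) = \<Omega> (cyl V S D)"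
proof -
  have "cyl W S D \<in> Lalg F R W B" by (rule Lalg_cyl[OF assms])
  then have "proj F R V W B \<Omega> (cyl W S D) = \<Omega> (cyl V W (cyl W S D))" by (rule proj_unf)
  then show ?thesis using cyl_cyl[OF assms(1), of V D] by metis
qed

lemma proj_is: assumes "keisler F R W P \<omega>" "\<forall>D\<in>Lalg F R W P. \<Omega> (cyl V W D) = \<omega> D"
  shows "proj F R V W P \<Omega> = \<omega>"
proof
  fix D show "proj F R V W P \<Omega> D = \<omega> D"
    using assms K_out[OF assms(1)] by (cases "D \<in> Lalg F R W P") (auto simp: proj_unf, simp add: proj_def)
qed

lemma restr_is: assumes "keisler F R V Q \<rho>" "\<forall>D\<in>Lalg F R V Q. \<Omega> D = \<rho> D"
  shows "restr F R V Q \<Omega> = \<rho>"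
proof
  fix D show "restr F R V Q \<Omega> D = \<rho> D"
    using assms K_out[OF assms(1)] unfolding restr_def by auto
qed

lemma keisler_proj: assumes "keisler F R V B \<Omega>" "W \<subseteq> V" shows "keisler F R W B (proj F R V W B \<Omega>)"
  unfolding keisler_def
proof (intro conjI allI impI ballI)
  fix D assume "D \<notin> Lalg F R W B" then show "proj F R V W B \<Omega> D = 0" unfolding proj_def by simp
next
  fix D show "0 \<le> proj F R V W B \<Omega> D" unfolding proj_def using K_nonneg[OF assms(1)] by simp
next
  show "proj F R V W B \<Omega> (W \<rightarrow>\<^sub>E UNIV) = 1"
    using proj_unf[OF Lalg_top] cyl_top[OF assms(2)] K_top[OF assms(1)] by metis
next
  fix D E assume h: "D \<in> Lalg F R W B" "E \<in> Lalg F R W B" "D \<inter> E = {}"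
  have "proj F R V W B \<Omega> (D \<union> E) = \<Omega> (cyl V W D \<union> cyl V W E)"
    using proj_unf[OF Lalg_un[OF h(1,2)]] cyl_Un by metis
  also have "\<dots> = \<Omega> (cyl V W D) + \<Omega> (cyl V W E)"
    using h by (intro K_add[OF assms(1)] Lalg_cyl[OF assms(2)]) (auto simp: cyl_def)
  finally show "proj F R V W B \<Omega> (D \<union> E) = proj F R V W B \<Omega> D + proj F R V W B \<Omega> E"
    using proj_unf[OF h(1)] proj_unf[OF h(2)] by simp
qed

end




theorem proposition3p12:
  fixes F :: "'f \<Rightarrow> 'u list \<Rightarrow> 'u" and R :: "'r \<Rightarrow> 'u list \<Rightarrow> bool"
    and \<kappa> :: "'k rel" and A :: "'u set" and X Y Z :: "nat set"
    and \<mu> \<nu> \<eta> :: "(nat \<Rightarrow> 'u) set \<Rightarrow> real"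
  assumes "monster F R \<kappa>" and "ordLess2 (card_of A) \<kappa>"
    and "finite X" and "finite Y" and "finite Z"
    and "X \<inter> Y = {}" and "Y \<inter> Z = {}" and "X \<inter> Z = {}"
    and "keisler F R X UNIV \<mu>" and "keisler F R Y UNIV \<nu>" and "keisler F R Z UNIV \<eta>"
    and "geE F R A X Y \<mu> \<nu>" and "geE F R A Y Z \<nu> \<eta>"
  shows "geE F R A X Z \<mu> \<eta>"
proof -
  note fX = assms(3) and fY = assms(4) and fZ = assms(5) and XZ = assms(8)
  note k\<mu> = assms(9) and k\<nu> = assms(10) and k\<eta> = assms(11)
  define V where "V = X \<union> Y \<union> Z"
  have fV: "finite V" unfolding V_def using fX fY fZ by simp
  obtain lam1 where l1k: "keisler F R (X \<union> Y) A lam1"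
    and l1x: "proj F R (X \<union> Y) X A lam1 = restr F R X A \<mu>"
    and H1: "\<And>\<omega>. keisler F R (X \<union> Y) UNIV \<omega> \<Longrightarrow> restr F R (X \<union> Y) A \<omega> = lam1
               \<Longrightarrow> proj F R (X \<union> Y) X UNIV \<omega> = \<mu> \<Longrightarrow> proj F R (X \<union> Y) Y UNIV \<omega> = \<nu>"
    using assms(12) unfolding geE_def by blast
  obtain lam2 where l2k: "keisler F R (Y \<union> Z) A lam2"
    and l2y: "proj F R (Y \<union> Z) Y A lam2 = restr F R Y A \<nu>"
    and H2: "\<And>\<omega>. keisler F R (Y \<union> Z) UNIV \<omega> \<Longrightarrow> restr F R (Y \<union> Z) A \<omega> = lam2
               \<Longrightarrow> proj F R (Y \<union> Z) Y UNIV \<omega> = \<nu> \<Longrightarrow> proj F R (Y \<union> Z) Z UNIV \<omega> = \<eta>"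
    using assms(13) unfolding geE_def by blast

  have comp1: "\<forall>\<gamma>\<in>Lalg F R X A. \<mu> (cyl X X \<gamma>) = lam1 (cyl (X \<union> Y) X \<gamma>)"
  proof
    fix \<gamma> assume g: "\<gamma> \<in> Lalg F R X A"
    have "\<mu> (cyl X X \<gamma>) = \<mu> \<gamma>" using cyl_same[OF Lalg_sub[OF g]] by simp
    also have "\<dots> = restr F R X A \<mu> \<gamma>" using g unfolding restr_def by simp
    also have "\<dots> = lam1 (cyl (X \<union> Y) X \<gamma>)" using proj_unf[OF g, of "X \<union> Y" lam1] l1x by simp
    finally show "\<mu> (cyl X X \<gamma>) = lam1 (cyl (X \<union> Y) X \<gamma>)" .
  qed
  obtain \<omega>1 where o1k: "keisler F R (X \<union> Y) UNIV \<omega>1"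
    and o1a: "\<forall>D\<in>Lalg F R X UNIV. \<omega>1 (cyl (X \<union> Y) X D) = \<mu> D"
    and o1b: "\<forall>D\<in>Lalg F R (X \<union> Y) A. \<omega>1 (cyl (X \<union> Y) (X \<union> Y) D) = lam1 D"
    using ext_measure[of "X \<union> Y" X "X \<union> Y" X F R UNIV \<mu> A lam1] fX fY k\<mu> l1k comp1 by auto
  have o1b': "\<forall>D\<in>Lalg F R (X \<union> Y) A. \<omega>1 D = lam1 D"
    using o1b cyl_same[OF Lalg_sub] by metis
  have "proj F R (X \<union> Y) Y UNIV \<omega>1 = \<nu>"
  proof (rule H1[OF o1k])
    show "restr F R (X \<union> Y) A \<omega>1 = lam1" using restr_is[OF l1k o1b'] .
    show "proj F R (X \<union> Y) X UNIV \<omega>1 = \<mu>" using proj_is[OF k\<mu> o1a] .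
  qed
  then have compY1: "\<forall>\<gamma>\<in>Lalg F R Y A. lam1 (cyl (X \<union> Y) Y \<gamma>) = \<nu> \<gamma>"
  proof (intro ballI)
    fix \<gamma> assume pr: "proj F R (X \<union> Y) Y UNIV \<omega>1 = \<nu>" and g: "\<gamma> \<in> Lalg F R Y A"
    have gU: "\<gamma> \<in> Lalg F R Y UNIV" using g Lalg_mono[of A UNIV] by blast
    have "cyl (X \<union> Y) Y \<gamma> \<in> Lalg F R (X \<union> Y) A" using Lalg_cyl[OF _ g] by blast
    then have "lam1 (cyl (X \<union> Y) Y \<gamma>) = \<omega>1 (cyl (X \<union> Y) Y \<gamma>)" using o1b' by simp
    also have "\<dots> = \<nu> \<gamma>" using proj_unf[OF gU, of "X \<union> Y" \<omega>1] pr by simp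
    finally show "lam1 (cyl (X \<union> Y) Y \<gamma>) = \<nu> \<gamma>" .
  qed
  have compY2: "\<forall>\<gamma>\<in>Lalg F R Y A. lam2 (cyl (Y \<union> Z) Y \<gamma>) = \<nu> \<gamma>"
  proof
    fix \<gamma> assume g: "\<gamma> \<in> Lalg F R Y A"
    have "lam2 (cyl (Y \<union> Z) Y \<gamma>) = proj F R (Y \<union> Z) Y A lam2 \<gamma>" using proj_unf[OF g] by simp
    also have "\<dots> = \<nu> \<gamma>" using l2y g unfolding restr_def by simp
    finally show "lam2 (cyl (Y \<union> Z) Y \<gamma>) = \<nu> \<gamma>" .
  qed

  text \<open>Step 2: amalgamate lam1 and lam2 over A.\<close>
  have VV: "(X \<union> Y) \<union> (Y \<union> Z) = V" unfolding V_def by blast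
  have YY: "Y = (X \<union> Y) \<inter> (Y \<union> Z)" using XZ by blast
  obtain Lx where Lxk: "keisler F R V A Lx"
    and Lx1: "\<forall>D\<in>Lalg F R (X \<union> Y) A. Lx (cyl V (X \<union> Y) D) = lam1 D"
    and Lx2: "\<forall>D\<in>Lalg F R (Y \<union> Z) A. Lx (cyl V (Y \<union> Z) D) = lam2 D"
    using ext_measure[OF _ VV YY l1k l2k order_refl] fY fZ compY1 compY2 by auto
  define lam where "lam = proj F R V (X \<union> Z) A Lx"

  show ?thesis
    unfolding geE_def
  proof (intro exI conjI allI impI)
    show "keisler F R (X \<union> Z) A lam" unfolding lam_def by (rule keisler_proj[OF Lxk]) (auto simp: V_def)
    show "proj F R (X \<union> Z) X A lam = restr F R X A \<mu>"
    proof
      fix D show "proj F R (X \<union> Z) X A lam D = restr F R X A \<mu> D"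
      proof (cases "D \<in> Lalg F R X A")
        case True
        have "proj F R (X \<union> Z) X A lam D = lam (cyl (X \<union> Z) X D)" using proj_unf[OF True] by simp
        also have "\<dots> = Lx (cyl V X D)" unfolding lam_def by (rule proj_cyl[OF _ True]) auto
        also have "\<dots> = Lx (cyl V (X \<union> Y) (cyl (X \<union> Y) X D))" using cyl_cyl[of X "X \<union> Y" V D] by auto
        also have "\<dots> = lam1 (cyl (X \<union> Y) X D)" using Lx1 Lalg_cyl[OF _ True, of "X \<union> Y"] by auto
        also have "\<dots> = proj F R (X \<union> Y) X A lam1 D" using proj_unf[OF True] by simp
        finally show ?thesis using l1x by simp
      next
        case False then show ?thesis unfolding proj_def restr_def by simp
      qed
    qed
  next
    fix \<omega> assume h: "keisler F R (X \<union> Z) UNIV \<omega> \<and> restr F R (X \<union> Z) A \<omega> = lam \<and> proj F R (X \<union> Z) X UNIV \<omega> = \<mu>"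
    have ok: "keisler F R (X \<union> Z) UNIV \<omega>" and ores: "restr F R (X \<union> Z) A \<omega> = lam"
      and ox: "proj F R (X \<union> Z) X UNIV \<omega> = \<mu>" using h by auto
    have compXZ: "\<forall>\<gamma>\<in>Lalg F R (X \<union> Z) A. \<omega> (cyl (X \<union> Z) (X \<union> Z) \<gamma>) = Lx (cyl V (X \<union> Z) \<gamma>)"
    proof
      fix \<gamma> assume g: "\<gamma> \<in> Lalg F R (X \<union> Z) A"
      have "\<omega> (cyl (X \<union> Z) (X \<union> Z) \<gamma>) = \<omega> \<gamma>" using cyl_same[OF Lalg_sub[OF g]] by simp
      also have "\<dots> = restr F R (X \<union> Z) A \<omega> \<gamma>" using g unfolding restr_def by simp
      also have "\<dots> = Lx (cyl V (X \<union> Z) \<gamma>)" using ores proj_unf[OF g] unfolding lam_def by simp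
      finally show "\<omega> (cyl (X \<union> Z) (X \<union> Z) \<gamma>) = Lx (cyl V (X \<union> Z) \<gamma>)" .
    qed
    have VV2: "(X \<union> Z) \<union> V = V" and XZV: "X \<union> Z = (X \<union> Z) \<inter> V" unfolding V_def by blast+
    obtain \<Omega> where \<Omega>k: "keisler F R V UNIV \<Omega>"
      and \<Omega>1: "\<forall>D\<in>Lalg F R (X \<union> Z) UNIV. \<Omega> (cyl V (X \<union> Z) D) = \<omega> D"
      and \<Omega>2: "\<forall>D\<in>Lalg F R V A. \<Omega> (cyl V V D) = Lx D"
      using ext_measure[OF fV VV2 XZV ok Lxk subset_UNIV compXZ] by blast
    have \<Omega>2': "\<forall>D\<in>Lalg F R V A. \<Omega> D = Lx D" using \<Omega>2 cyl_same[OF Lalg_sub] by metis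
    have XYV: "X \<union> Y \<subseteq> V" and YZV: "Y \<union> Z \<subseteq> V" and XZsV: "X \<union> Z \<subseteq> V" unfolding V_def by blast+
    define \<omega>1' where "\<omega>1' = proj F R V (X \<union> Y) UNIV \<Omega>"
    define \<omega>2' where "\<omega>2' = proj F R V (Y \<union> Z) UNIV \<Omega>"
    have thru: "\<Omega> (cyl V S D) = \<omega>' (cyl W S D)" if "\<omega>' = proj F R V W UNIV \<Omega>" "S \<subseteq> W" "D \<in> Lalg F R S UNIV" for \<omega>' W S D
      using proj_cyl[OF that(2,3), of V \<Omega>] that(1) by simp
    have om_thru: "\<Omega> (cyl V S D) = \<omega> (cyl (X \<union> Z) S D)" if "S \<subseteq> X \<union> Z" "D \<in> Lalg F R S UNIV" for S D
    proof -
      have "cyl (X \<union> Z) S D \<in> Lalg F R (X \<union> Z) UNIV" by (rule Lalg_cyl[OF that])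
      then show ?thesis using \<Omega>1 cyl_cyl[OF that(1), of V D] by metis
    qed
    have k1: "keisler F R (X \<union> Y) UNIV \<omega>1'" unfolding \<omega>1'_def by (rule keisler_proj[OF \<Omega>k XYV])
    have k2: "keisler F R (Y \<union> Z) UNIV \<omega>2'" unfolding \<omega>2'_def by (rule keisler_proj[OF \<Omega>k YZV])
    have r1: "restr F R (X \<union> Y) A \<omega>1' = lam1"
    proof (rule restr_is[OF l1k], rule ballI)
      fix D assume D: "D \<in> Lalg F R (X \<union> Y) A"
      have DU: "D \<in> Lalg F R (X \<union> Y) UNIV" using D Lalg_mono[of A UNIV] by blast
      have "\<omega>1' D = \<Omega> (cyl V (X \<union> Y) D)" unfolding \<omega>1'_def by (rule proj_unf[OF DU])
      also have "\<dots> = Lx (cyl V (X \<union> Y) D)" using \<Omega>2' Lalg_cyl[OF XYV D] by simp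
      also have "\<dots> = lam1 D" using Lx1 D by simp
      finally show "\<omega>1' D = lam1 D" .
    qed
    have r2: "restr F R (Y \<union> Z) A \<omega>2' = lam2"
    proof (rule restr_is[OF l2k], rule ballI)
      fix D assume D: "D \<in> Lalg F R (Y \<union> Z) A"
      have DU: "D \<in> Lalg F R (Y \<union> Z) UNIV" using D Lalg_mono[of A UNIV] by blast
      have "\<omega>2' D = \<Omega> (cyl V (Y \<union> Z) D)" unfolding \<omega>2'_def by (rule proj_unf[OF DU])
      also have "\<dots> = Lx (cyl V (Y \<union> Z) D)" using \<Omega>2' Lalg_cyl[OF YZV D] by simp
      also have "\<dots> = lam2 D" using Lx2 D by simp
      finally show "\<omega>2' D = lam2 D" .
    qed
    have p1x: "proj F R (X \<union> Y) X UNIV \<omega>1' = \<mu>"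
    proof (rule proj_is[OF k\<mu>], rule ballI)
      fix D assume D: "D \<in> Lalg F R X UNIV"
      have "\<omega>1' (cyl (X \<union> Y) X D) = \<Omega> (cyl V X D)" using thru[OF \<omega>1'_def _ D] by simp
      also have "\<dots> = \<omega> (cyl (X \<union> Z) X D)" using om_thru[OF _ D] by simp
      also have "\<dots> = \<mu> D" using proj_unf[OF D, of "X \<union> Z" \<omega>] ox by simp
      finally show "\<omega>1' (cyl (X \<union> Y) X D) = \<mu> D" .
    qed
    have p1y: "proj F R (X \<union> Y) Y UNIV \<omega>1' = \<nu>" by (rule H1[OF k1 r1 p1x])
    have p2y: "proj F R (Y \<union> Z) Y UNIV \<omega>2' = \<nu>"
    proof (rule proj_is[OF k\<nu>], rule ballI)
      fix D assume D: "D \<in> Lalg F R Y UNIV"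
      have "\<omega>2' (cyl (Y \<union> Z) Y D) = \<Omega> (cyl V Y D)" using thru[OF \<omega>2'_def _ D] by simp
      also have "\<dots> = \<omega>1' (cyl (X \<union> Y) Y D)" using thru[OF \<omega>1'_def _ D] by simp
      also have "\<dots> = \<nu> D" using proj_unf[OF D, of "X \<union> Y" \<omega>1'] p1y by simp
      finally show "\<omega>2' (cyl (Y \<union> Z) Y D) = \<nu> D" .
    qed
    have p2z: "proj F R (Y \<union> Z) Z UNIV \<omega>2' = \<eta>" by (rule H2[OF k2 r2 p2y])
    show "proj F R (X \<union> Z) Z UNIV \<omega> = \<eta>"
    proof (rule proj_is[OF k\<eta>], rule ballI)
      fix D assume D: "D \<in> Lalg F R Z UNIV"
      have "\<omega> (cyl (X \<union> Z) Z D) = \<Omega> (cyl V Z D)" using om_thru[OF _ D] by simp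
      also have "\<dots> = \<omega>2' (cyl (Y \<union> Z) Z D)" using thru[OF \<omega>2'_def _ D] by simp
      also have "\<dots> = \<eta> D" using proj_unf[OF D, of "Y \<union> Z" \<omega>2'] p2z by simp
      finally show "\<omega> (cyl (X \<union> Z) Z D) = \<eta> D" .
    qed
  qed
qed


end
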